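(* There is an absolute constant $C > 0$ such that for all positive integers $n, k$ with $n \ge 3k$ there exist a positive integer $m$, a constant $H>0$, and a set $\Pi$ of linear-programming instances $\pi = (\bm{c}, \bm{A}, \bm{b}) \in \mathbb{R}^n \times \mathbb{R}^{m\times n} \times \mathbb{R}^m$ (each representing the LP $\max\{\bm{c}^\top \bm{x} : \bm{A}\bm{x} \le \bm{b}\}$) such that for every $\pi\in\Pi$, $\bm{x}=\mathbf{0}_n$ is feasible and the optimal value is at most $H$, and such that the class $\mathcal{U} = \{u(\bm{P}, \cdot) : \Pi \to \mathbb{R} \mid \bm{P} \in \mathbb{R}^{n\times k}\}$, where $u(\bm{P}, \pi) = \max\{\bm{c}^\top \bm{P}\bm{y} : \bm{A}\bm{P}\bm{y} \le \bm{b},\ \bm{y} \in \mathbb{R}^k\}$, satisfies $\mathrm{pdim}(\mathcal{U}) \ge C\, nk$. *)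

theory Defs
  imports "HOL-Analysis.Analysis"
begin

text \<open>Dimensions vary inside the statement, so vectors in R^d are functions
  nat => real (entries with index >= d are ignored / required to be zero),
  and matrices in R^(p x q) are functions nat => nat => real.\<close>

type_synonym lp_instance = "(nat \<Rightarrow> real) \<times> (nat \<Rightarrow> nat \<Rightarrow> real) \<times> (nat \<Rightarrow> real)"

definition lp_instances :: "nat \<Rightarrow> nat \<Rightarrow> lp_instance set" where
  "lp_instances n m = {(c, A, b).
      (\<forall>j. n \<le> j \<longrightarrow> c j = 0) \<and>
      (\<forall>i j. (m \<le> i \<or> n \<le> j) \<longrightarrow> A i j = 0) \<and>
      (\<forall>i. m \<le> i \<longrightarrow> b i = 0)}"

definition matrices :: "nat \<Rightarrow> nat \<Rightarrow> (nat \<Rightarrow> nat \<Rightarrow> real) set" where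
  "matrices p q = {P. \<forall>i j. (p \<le> i \<or> q \<le> j) \<longrightarrow> P i j = 0}"

definition lp_feasible :: "nat \<Rightarrow> nat \<Rightarrow> lp_instance \<Rightarrow> (nat \<Rightarrow> real) \<Rightarrow> bool" where
  "lp_feasible n m \<pi> x = (case \<pi> of (c, A, b) \<Rightarrow> (\<forall>i<m. (\<Sum>j<n. A i j * x j) \<le> b i))"

definition lp_value :: "nat \<Rightarrow> nat \<Rightarrow> lp_instance \<Rightarrow> ereal" where
  "lp_value n m \<pi> = (case \<pi> of (c, A, b) \<Rightarrow>
      Sup {ereal (\<Sum>j<n. c j * x j) | x. lp_feasible n m \<pi> x})"

definition proj_value :: "nat \<Rightarrow> nat \<Rightarrow> nat \<Rightarrow> (nat \<Rightarrow> nat \<Rightarrow> real) \<Rightarrow> lp_instance \<Rightarrow> real" where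
  "proj_value n k m P \<pi> = (case \<pi> of (c, A, b) \<Rightarrow>
      real_of_ereal (Sup {ereal (\<Sum>j<n. c j * (\<Sum>l<k. P j l * y l)) | y.
         \<forall>i<m. (\<Sum>j<n. A i j * (\<Sum>l<k. P j l * y l)) \<le> b i}))"

definition proj_class :: "nat \<Rightarrow> nat \<Rightarrow> nat \<Rightarrow> (lp_instance \<Rightarrow> real) set" where
  "proj_class n k m = {proj_value n k m P | P. P \<in> matrices n k}"

definition pshatters :: "('a \<Rightarrow> real) set \<Rightarrow> 'a set \<Rightarrow> bool" where
  "pshatters F S = (\<exists>t :: 'a \<Rightarrow> real. \<forall>T \<subseteq> S. \<exists>f \<in> F. \<forall>x \<in> S. (t x \<le> f x \<longleftrightarrow> x \<in> T))"

definition pdim :: "('a \<Rightarrow> real) set \<Rightarrow> 'a set \<Rightarrow> ereal" where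
  "pdim F X = Sup {ereal (real (card S)) | S. S \<subseteq> X \<and> finite S \<and> pshatters F S}"

end

theory Submission
  imports Defs
begin

definition instc :: "nat \<Rightarrow> nat \<Rightarrow> real" where
  "instc j = (\<lambda>j'. if j' = j then 1 else 0)"

definition instA :: "nat \<Rightarrow> nat \<Rightarrow> nat \<Rightarrow> nat \<Rightarrow> real" where
  "instA k j = (\<lambda>i j'. if i < k then (if j' = i then 1 else 0)
     else if i < 2 * k then (if j' = i - k then -1 else 0)
     else if i = 2 * k then (if j' = j then 1 else 0) else 0)"

definition instb :: "nat \<Rightarrow> nat \<Rightarrow> nat \<Rightarrow> real" where
  "instb k l = (\<lambda>i. if i = l then 1 else if i = 2 * k then 1 else 0)"

definition inst :: "nat \<Rightarrow> nat \<Rightarrow> nat \<Rightarrow> lp_instance" where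
  "inst k j l = (instc j, instA k j, instb k l)"

definition PT :: "nat \<Rightarrow> nat \<Rightarrow> (nat \<Rightarrow> nat \<Rightarrow> bool) \<Rightarrow> nat \<Rightarrow> nat \<Rightarrow> real" where
  "PT n k B = (\<lambda>j' l'. if j' < n \<and> l' < k then
      (if j' < k then (if j' = l' then 1 else 0) else (if B j' l' then 1 else 0)) else 0)"

lemma sum_delta_mult: fixes a :: real shows "i \<in> S \<Longrightarrow> finite S \<Longrightarrow> (\<Sum>j\<in>S. (if j = i then a else 0) * z j) = a * z i"
proof -
  assume "i \<in> S" "finite S"
  have "(\<Sum>j\<in>S. (if j = i then a else 0) * z j) = (\<Sum>j\<in>S. if j = i then a * z i else 0)"
    by (rule sum.cong) auto
  then show ?thesis using \<open>i \<in> S\<close> \<open>finite S\<close> by simp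
qed

lemma row1: "i < k \<Longrightarrow> k \<le> n \<Longrightarrow> (\<Sum>j'<n. instA k j i j' * z j') = z i"
  unfolding instA_def using sum_delta_mult[of i "{..<n}" 1 z] by simp

lemma row2: "k \<le> i \<Longrightarrow> i < 2*k \<Longrightarrow> k \<le> n \<Longrightarrow> (\<Sum>j'<n. instA k j i j' * z j') = - z (i - k)"
  unfolding instA_def using sum_delta_mult[of "i-k" "{..<n}" "-1" z] by simp

lemma row3: "j < n \<Longrightarrow> (\<Sum>j'<n. instA k j (2*k) j' * z j') = z j"
  unfolding instA_def using sum_delta_mult[of j "{..<n}" 1 z] by simp

lemma obj: "j < n \<Longrightarrow> (\<Sum>j'<n. instc j j' * z j') = z j"
  unfolding instc_def using sum_delta_mult[of j "{..<n}" 1 z] by simp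

lemma Py_low: "i < k \<Longrightarrow> k \<le> n \<Longrightarrow> (\<Sum>l'<k. PT n k B i l' * y l') = y i"
  unfolding PT_def using sum_delta_mult[of i "{..<k}" 1 y]
  by (simp add: eq_commute[of i])

lemma Py_high: "k \<le> j \<Longrightarrow> j < n \<Longrightarrow> (\<Sum>l'<k. PT n k B j l' * y l') = (\<Sum>l'<k. (if B j l' then 1 else 0) * y l')"
  unfolding PT_def by (intro sum.cong) auto

lemma lp_feasible_inst_rows:
  assumes "k \<le> n" "j < n" "l < k"
    and F: "\<forall>i<2*k+1. (\<Sum>j'<n. instA k j i j' * z j') \<le> instb k l i"
  shows "\<And>i. i < k \<Longrightarrow> z i \<le> (if i = l then 1 else 0)"
    and "\<And>i. i < k \<Longrightarrow> 0 \<le> z i"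
    and "z j \<le> 1"
proof -
  fix i assume i: "i < k"
  have "(\<Sum>j'<n. instA k j i j' * z j') \<le> instb k l i" using F i by auto
  then show "z i \<le> (if i = l then 1 else 0)" using row1[OF i assms(1)] i unfolding instb_def by auto
next
  fix i assume i: "i < k"
  have "(\<Sum>j'<n. instA k j (i+k) j' * z j') \<le> instb k l (i+k)" using F i by auto
  then show "0 \<le> z i" using row2[of k "i+k" n j z] i assms unfolding instb_def by auto
next
  have "(\<Sum>j'<n. instA k j (2*k) j' * z j') \<le> instb k l (2*k)" using F by auto
  then show "z j \<le> 1" using row3[OF assms(2)] assms unfolding instb_def by auto
qed

lemma main_value:
  assumes kj: "k \<le> j" and jn: "j < n" and lk: "l < k"
  shows "proj_value n k (2*k+1) (PT n k B) (inst k j l) = (if B j l then 1 else 0)"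
proof -
  have kn: "k \<le> n" using kj jn by simp
  define v :: real where "v = (if B j l then 1 else 0)"
  let ?Py = "\<lambda>y j'. \<Sum>l'<k. PT n k B j' l' * y l'"
  let ?S = "{ereal (\<Sum>j'<n. instc j j' * ?Py y j') | y.
         \<forall>i<2*k+1. (\<Sum>j'<n. instA k j i j' * ?Py y j') \<le> instb k l i}"
  have ub: "x \<le> ereal v" if "x \<in> ?S" for x
  proof -
    obtain y where x: "x = ereal (\<Sum>j'<n. instc j j' * ?Py y j')"
      and F: "\<forall>i<2*k+1. (\<Sum>j'<n. instA k j i j' * ?Py y j') \<le> instb k l i"
      using \<open>x \<in> ?S\<close> by blast
    note R = lp_feasible_inst_rows[OF kn jn lk F]
    have yz: "y i = 0" if "i < k" "i \<noteq> l" for i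
      using R(1)[of i] R(2)[of i] that Py_low[OF that(1) kn, of B y] by auto
    have y1: "y l \<le> 1" "0 \<le> y l"
      using R(1)[of l] R(2)[of l] Py_low[OF lk kn, of B y] lk by auto
    have "(\<Sum>l'<k. (if B j l' then 1 else 0) * y l') = (\<Sum>l'<k. (if l' = l then (if B j l then 1 else 0) else 0) * y l')"
      by (intro sum.cong) (auto simp: yz)
    also have "\<dots> = v * y l" unfolding v_def using sum_delta_mult[of l "{..<k}" _ y] lk by simp
    finally have "?Py y j = v * y l" using Py_high[OF kj jn] by simp
    then have "(\<Sum>j'<n. instc j j' * ?Py y j') = v * y l" using obj[OF jn] by simp
    also have "\<dots> \<le> v" using y1 unfolding v_def by auto
    finally show ?thesis using x by simp
  qed
  define y0 :: "nat \<Rightarrow> real" where "y0 = (\<lambda>i. if i = l \<and> B j l then 1 else 0)"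
  have Py0: "?Py y0 j = v"
  proof -
    have "?Py y0 j = (\<Sum>l'<k. (if B j l' then 1 else 0) * y0 l')" using Py_high[OF kj jn] .
    also have "\<dots> = (\<Sum>l'<k. (if l' = l then v else 0) * y0 l')"
      by (intro sum.cong) (auto simp: y0_def v_def)
    also have "\<dots> = v * y0 l" using sum_delta_mult[of l "{..<k}" _ y0] lk by simp
    finally show ?thesis by (simp add: y0_def v_def)
  qed
  have mem: "ereal v \<in> ?S"
  proof -
    have "\<forall>i<2*k+1. (\<Sum>j'<n. instA k j i j' * ?Py y0 j') \<le> instb k l i"
    proof (intro allI impI)
      fix i assume i: "i < 2*k+1"
      consider "i < k" | "k \<le> i" "i < 2*k" | "i = 2*k" using i by linarith
      then show "(\<Sum>j'<n. instA k j i j' * ?Py y0 j') \<le> instb k l i"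
      proof cases
        case 1 then show ?thesis using row1[OF 1 kn] Py_low[OF 1 kn] by (auto simp: y0_def instb_def)
      next
        case 2 then have "i - k < k" by simp
        then show ?thesis using 2 row2[OF 2 kn] Py_low[of "i-k" k n B y0] kn by (auto simp: y0_def instb_def)
      next
        case 3 then show ?thesis using row3[OF jn] Py0 lk by (auto simp: v_def instb_def)
      qed
    qed
    moreover have "(\<Sum>j'<n. instc j j' * ?Py y0 j') = v" using obj[OF jn] Py0 by simp
    ultimately show ?thesis by (intro CollectI exI[of _ y0]) auto
  qed
  have "Sup ?S = ereal v" by (rule cSup_eq_maximum[OF mem ub])
  then show ?thesis unfolding proj_value_def inst_def v_def by simp
qed


lemma inst_in:
  assumes "k \<le> j" "j < n" "l < k"
  shows "inst k j l \<in> lp_instances n (2*k+1)"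
  using assms unfolding lp_instances_def inst_def instc_def instA_def instb_def by auto

lemma inst_feas0:
  assumes "l < k"
  shows "lp_feasible n (2*k+1) (inst k j l) (\<lambda>_. 0)"
  using assms unfolding lp_feasible_def inst_def instb_def by auto

lemma inst_value:
  assumes "k \<le> j" "j < n" "l < k"
  shows "lp_value n (2*k+1) (inst k j l) \<le> ereal 1"
  unfolding lp_value_def inst_def
proof (simp only: prod.case, rule Sup_least)
  fix e assume "e \<in> {ereal (\<Sum>j'<n. instc j j' * x j') |x. lp_feasible n (2 * k + 1) (instc j, instA k j, instb k l) x}"
  then obtain x where e: "e = ereal (\<Sum>j'<n. instc j j' * x j')"
    and F: "lp_feasible n (2 * k + 1) (instc j, instA k j, instb k l) x" by blast
  have "(\<Sum>j'<n. instA k j (2*k) j' * x j') \<le> instb k l (2*k)" using F unfolding lp_feasible_def by auto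
  then have "x j \<le> 1" using row3[OF assms(2)] assms unfolding instb_def by auto
  then show "e \<le> ereal 1" using e obj[OF assms(2)] by simp
qed

lemma inst_inj: "inj_on (\<lambda>(j, l). inst k j l) ({k..<n} \<times> {..<k})"
proof (rule inj_onI, clarsimp)
  fix j l j' l' assume "l < k" "l' < k" "inst k j l = inst k j' l'"
  then have c: "instc j = instc j'" and b: "instb k l = instb k l'" unfolding inst_def by auto
  from fun_cong[OF c, of j] have "j = j'" unfolding instc_def by (auto split: if_splits)
  moreover from fun_cong[OF b, of l] \<open>l < k\<close> have "l = l'" unfolding instb_def by (auto split: if_splits)
  ultimately show "j = j' \<and> l = l'" by simp
qed

theorem theorem2:
  shows "\<exists>C :: real. C > 0 \<and>
    (\<forall>n k :: nat. 0 < n \<longrightarrow> 0 < k \<longrightarrow> 3 * k \<le> n \<longrightarrow>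
      (\<exists>m :: nat. 0 < m \<and> (\<exists>H :: real. H > 0 \<and> (\<exists>Insts :: lp_instance set.
         Insts \<subseteq> lp_instances n m \<and>
         (\<forall>\<pi> \<in> Insts. lp_feasible n m \<pi> (\<lambda>_. 0) \<and> lp_value n m \<pi> \<le> ereal H) \<and>
         pdim (proj_class n k m) Insts \<ge> ereal (C * real n * real k)))))"
proof (intro exI[of _ "1/2"] conjI allI impI)
  fix n k :: nat assume "0 < n" "0 < k" and nk: "3 * k \<le> n"
  define I where "I = (\<lambda>(j, l). inst k j l) ` ({k..<n} \<times> {..<k})"
  have sub: "I \<subseteq> lp_instances n (2*k+1)" unfolding I_def using inst_in by auto
  have good: "\<forall>\<pi> \<in> I. lp_feasible n (2*k+1) \<pi> (\<lambda>_. 0) \<and> lp_value n (2*k+1) \<pi> \<le> ereal 1"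
    unfolding I_def using inst_feas0 inst_value by auto
  have fin: "finite I" unfolding I_def by simp
  have card: "card I = (n - k) * k" unfolding I_def using card_image[OF inst_inj] by simp
  have sh: "pshatters (proj_class n k (2*k+1)) I"
    unfolding pshatters_def
  proof (intro exI[of _ "\<lambda>_. 1"] allI impI)
    fix T assume "T \<subseteq> I"
    define B where "B = (\<lambda>j l. inst k j l \<in> T)"
    have P: "PT n k B \<in> matrices n k" unfolding matrices_def PT_def by auto
    have "\<forall>x\<in>I. (1 \<le> proj_value n k (2*k+1) (PT n k B) x) = (x \<in> T)"
    proof
      fix x assume "x \<in> I"
      then obtain j l where "k \<le> j" "j < n" "l < k" "x = inst k j l" unfolding I_def by auto
      then show "(1 \<le> proj_value n k (2*k+1) (PT n k B) x) = (x \<in> T)"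
        using main_value[of k j n l B] unfolding B_def by auto
    qed
    moreover have "proj_value n k (2*k+1) (PT n k B) \<in> proj_class n k (2*k+1)"
      unfolding proj_class_def using P by blast
    ultimately show "\<exists>f\<in>proj_class n k (2*k+1). \<forall>x\<in>I. (1 \<le> f x) = (x \<in> T)" by blast
  qed
  have "ereal (real (card I)) \<le> pdim (proj_class n k (2*k+1)) I"
    unfolding pdim_def by (rule Sup_upper) (use fin sh in blast)
  moreover have "1/2 * real n * real k \<le> real (card I)"
  proof -
    have "real (card I) = (real n - real k) * real k" unfolding card using nk by (simp add: of_nat_diff)
    moreover have "real n / 2 \<le> real n - real k" using nk by linarith
    moreover have "real n / 2 * real k \<le> (real n - real k) * real k"
      using \<open>real n / 2 \<le> real n - real k\<close> by (rule mult_right_mono) simp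
    ultimately show ?thesis by simp
  qed
  ultimately have "ereal (1/2 * real n * real k) \<le> pdim (proj_class n k (2*k+1)) I"
    by (meson ereal_less_eq(3) order_trans)
  then show "\<exists>m. 0 < m \<and> (\<exists>H>0. \<exists>Insts\<subseteq>lp_instances n m.
      (\<forall>\<pi>\<in>Insts. lp_feasible n m \<pi> (\<lambda>_. 0) \<and> lp_value n m \<pi> \<le> ereal H) \<and>
      ereal (1/2 * real n * real k) \<le> pdim (proj_class n k m) Insts)"
    using sub good by (intro exI[of _ "2*k+1"] conjI exI[of _ "1::real"] exI[of _ I]) auto
qed (simp)

end
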